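(* Let $G$ be a weighted voting game on players $N=\{1,\dots,n\}$ with characteristic function $v$. Then there exists a weighted representation $[q;w_1,\dots,w_n]$ of $G$ such that for all coalitions $C\neq C'$ with $v(C)=v(C')=1$ we have $\sum_{i\in C}w_i\neq\sum_{i\in C'}w_i$.
   Context: A simple game on $N$ is a function $v:2^N\to\{0,1\}$. It is a weighted voting game if there are $q\ge0$ and $w_1,\dots,w_n\ge0$ such that for all $S\subseteq N$: $v(S)=1\iff\sum_{j\in S}w_j\ge q$; such a vector $[q;w_1,\dots,w_n]$ is a weighted representation. *)

theory Defs
  imports Main "HOL.Real"
begin

text \<open>Players are N = {1..n}. A simple game is a function v from coalitions
  (subsets of {1..n}) to {0,1}; values of v outside Pow {1..n} are irrelevant.\<close>

definition simple_game :: "nat \<Rightarrow> (nat set \<Rightarrow> nat) \<Rightarrow> bool" where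
  "simple_game n v \<longleftrightarrow> (\<forall>S. S \<subseteq> {1..n} \<longrightarrow> v S \<in> {0, 1})"

definition weighted_representation ::
    "nat \<Rightarrow> (nat set \<Rightarrow> nat) \<Rightarrow> real \<Rightarrow> (nat \<Rightarrow> real) \<Rightarrow> bool" where
  "weighted_representation n v q w \<longleftrightarrow>
     q \<ge> 0 \<and> (\<forall>i\<in>{1..n}. w i \<ge> 0) \<and>
     (\<forall>S. S \<subseteq> {1..n} \<longrightarrow> (v S = 1 \<longleftrightarrow> (\<Sum>j\<in>S. w j) \<ge> q))"

definition weighted_voting_game :: "nat \<Rightarrow> (nat set \<Rightarrow> nat) \<Rightarrow> bool" where
  "weighted_voting_game n v \<longleftrightarrow>
     simple_game n v \<and> (\<exists>q w. weighted_representation n v q w)"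

end

theory Submission
  imports Defs "HOL-Library.Nat_Bijection"
begin

theorem lemma6:
  fixes n :: nat and v :: "nat set \<Rightarrow> nat"
  assumes "weighted_voting_game n v"
  shows "\<exists>q w. weighted_representation n v q w \<and>
           (\<forall>C C'. C \<subseteq> {1..n} \<longrightarrow> C' \<subseteq> {1..n} \<longrightarrow> C \<noteq> C' \<longrightarrow>
              v C = 1 \<longrightarrow> v C' = 1 \<longrightarrow> (\<Sum>i\<in>C. w i) \<noteq> (\<Sum>i\<in>C'. w i))"
proof -
  from assms obtain q w where rep: "weighted_representation n v q w"
    unfolding weighted_voting_game_def by blast
  have q0: "q \<ge> 0" and w0: "\<And>i. i \<in> {1..n} \<Longrightarrow> w i \<ge> 0"
    and vS: "\<And>S. S \<subseteq> {1..n} \<Longrightarrow> (v S = 1 \<longleftrightarrow> (\<Sum>j\<in>S. w j) \<ge> q)"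
    using rep unfolding weighted_representation_def by auto
  define sw where "sw S = (\<Sum>j\<in>S. w j)" for S
  define L where "L = {S. S \<subseteq> {1..n} \<and> v S \<noteq> 1}"
  have finL: "finite L" unfolding L_def by (rule finite_subset[of _ "Pow {1..n}"]) auto
  define delta where "delta = (if L = {} then 1 else q - Max (sw ` L))"
  have dpos: "delta > 0"
  proof (cases "L = {}")
    case False
    have "Max (sw ` L) \<in> sw ` L" using False finL by simp
    then obtain S where "S \<in> L" "Max (sw ` L) = sw S" by auto
    then show ?thesis using vS[of S] False unfolding delta_def L_def sw_def by auto
  qed (simp add: delta_def)
  have losing: "sw S \<le> q - delta" if "S \<subseteq> {1..n}" "v S \<noteq> 1" for S
  proof -
    have "S \<in> L" using that L_def by auto
    then have "sw S \<le> Max (sw ` L)" using finL by simp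
    then show ?thesis using \<open>S \<in> L\<close> unfolding delta_def by auto
  qed
  define M where "M = real (set_encode {1..n})"
  have M0: "M \<ge> 0" unfolding M_def by simp
  define e where "e S = real (set_encode S)" for S
  have eM: "e S \<le> M" if "S \<subseteq> {1..n}" for S
    unfolding e_def M_def set_encode_def using that
    by (simp add: sum_mono2)
  define B where "B = (\<lambda>(C,C'). (sw C' - sw C) / (e C - e C')) ` (Pow {1..n} \<times> Pow {1..n})"
  have finB: "finite B" unfolding B_def by simp
  have "infinite {0<..<delta / (M + 1)}" using dpos M0 by (intro infinite_Ioo) simp
  then obtain eps where eps: "eps \<in> {0<..<delta / (M + 1)}" "eps \<notin> B"
    using finB by (metis ex_in_conv finite_Diff2 infinite_imp_nonempty Diff_iff)
  define w' where "w' i = w i + eps * 2 ^ i" for i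
  have sw': "(\<Sum>j\<in>S. w' j) = sw S + eps * e S" for S
    unfolding w'_def sw_def e_def set_encode_def
    by (simp add: sum.distrib sum_distrib_left)
  have epsM: "eps * M < delta"
  proof -
    have "eps * (M + 1) < delta" using eps(1) M0 by (simp add: field_simps)
    then show ?thesis using eps(1) by (simp add: algebra_simps)
  qed
  have "weighted_representation n v q w'"
    unfolding weighted_representation_def
  proof (intro conjI ballI allI impI)
    show "0 \<le> q" by (rule q0)
  next
    fix i assume "i \<in> {1..n}"
    then show "0 \<le> w' i" using w0 eps(1) unfolding w'_def by simp
  next
    fix S :: "nat set" assume S: "S \<subseteq> {1..n}"
    have e0: "e S \<ge> 0" unfolding e_def by simp
    show "(v S = 1) = (q \<le> sum w' S)"
    proof
      assume "v S = 1"
      then have "q \<le> sw S" using vS[OF S] sw_def by simp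
      then show "q \<le> sum w' S" using sw' e0 eps(1) by (smt (verit) mult_nonneg_nonneg greaterThanLessThan_iff)
    next
      assume h: "q \<le> sum w' S"
      show "v S = 1"
      proof (rule ccontr)
        assume "v S \<noteq> 1"
        then have "sw S \<le> q - delta" using losing S by blast
        moreover have "eps * e S \<le> eps * M" using eM[OF S] eps(1) by (simp add: mult_left_mono)
        ultimately show False using h sw'[of S] epsM by linarith
      qed
    qed
  qed
  moreover have "(\<Sum>i\<in>C. w' i) \<noteq> (\<Sum>i\<in>C'. w' i)"
    if C: "C \<subseteq> {1..n}" "C' \<subseteq> {1..n}" "C \<noteq> C'" for C C'
  proof
    assume eq: "(\<Sum>i\<in>C. w' i) = (\<Sum>i\<in>C'. w' i)"
    have fin: "finite C" "finite C'" using C finite_subset by auto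
    have ne: "e C \<noteq> e C'" unfolding e_def using set_encode_eq[OF fin] C(3) by simp
    have "eps * (e C - e C') = sw C' - sw C" using eq sw'[of C] sw'[of C'] by (simp add: algebra_simps)
    then have "eps = (sw C' - sw C) / (e C - e C')" using ne by (simp add: field_simps)
    then have "eps \<in> B" unfolding B_def using C by force
    then show False using eps(2) by simp
  qed
  ultimately show ?thesis by blast
qed

end
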